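(* For $z=x+iy$ with $x>1$ and $y\in\mathbb{R}$, \[|\zeta(z)|^2=\zeta(2x)\sum_{m=1}^{\infty}\frac{2^{\omega(m)}}{m^{x}}\prod_{p\mid m}\cos\big(y\ln p^{v_p(m)}\big).\]
   Context: $\zeta(s)=\sum_{n\ge1}n^{-s}$ for $\Re(s)>1$; $\omega(m)$ is the number of distinct prime divisors of $m$; $v_p(m)$ is the exponent of the prime $p$ in $m$; the product is over the primes dividing $m$ (empty product $=1$). *)

theory Defs
  imports "HOL-Analysis.Analysis" "HOL-Computational_Algebra.Primes"
begin

text \<open>Riemann zeta function via its Dirichlet series (meaningful for Re s > 1).\<close>
definition zeta :: "complex \<Rightarrow> complex" where
  "zeta s = (\<Sum>n. inverse (of_nat (Suc n) powr s))"

definition omega :: "nat \<Rightarrow> nat" where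
  "omega m = card (prime_factors m)"

end

theory Submission
  imports Defs
begin

definition U :: "nat \<Rightarrow> nat set \<Rightarrow> nat" where
  "U m S = (\<Prod>p\<in>S. p ^ multiplicity p m)"

lemma U_pos: "U m S > 0" if "S \<subseteq> prime_factors m"
  using that unfolding U_def by (intro prod_pos) (auto dest: in_prime_factors_imp_prime prime_gt_0_nat)

lemma U_mult: assumes "m > 0" "S \<subseteq> prime_factors m"
  shows "U m S * U m (prime_factors m - S) = m"
proof -
  have "U m S * U m (prime_factors m - S) = (\<Prod>p\<in>prime_factors m. p ^ multiplicity p m)"
    unfolding U_def using assms(2) by (subst prod.subset_diff[of S]) auto
  also have "\<dots> = m" using prime_factorization_nat[OF assms(1)] by simp
  finally show ?thesis .
qed

lemma mult_U: assumes "S \<subseteq> prime_factors m" "prime p"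
  shows "multiplicity p (U m S) = (if p \<in> S then multiplicity p m else 0)"
  unfolding U_def using assms
  by (intro multiplicity_prod_prime_powers) (auto intro: finite_subset dest: in_prime_factors_imp_prime)

lemma pf_U: assumes "S \<subseteq> prime_factors m"
  shows "prime_factors (U m S) = S"
proof -
  have "prime_factors (U m S) = {p. prime p \<and> multiplicity p (U m S) > 0}"
    by (rule prime_factors_multiplicity)
  also have "\<dots> = S"
  proof (intro set_eqI iffI)
    fix p assume "p \<in> {p. prime p \<and> multiplicity p (U m S) > 0}"
    thus "p \<in> S" using assms by (auto simp: mult_U split: if_splits)
  next
    fix p assume p: "p \<in> S"
    hence "prime p" "multiplicity p m > 0" using assms by (auto simp: prime_factors_multiplicity)
    thus "p \<in> {p. prime p \<and> multiplicity p (U m S) > 0}" using assms p by (simp add: mult_U)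
  qed
  finally show ?thesis .
qed

lemma coprime_U: assumes "S \<subseteq> prime_factors m"
  shows "coprime (U m S) (U m (prime_factors m - S))"
  unfolding U_def using assms
  by (intro prod_coprime_left prod_coprime_right)
     (auto intro!: primes_coprime dest: in_prime_factors_imp_prime)

lemma U_coprime_left: assumes "u > 0" "w > 0" "coprime u w"
  shows "U (u*w) (prime_factors u) = u"
proof -
  have "U (u*w) (prime_factors u) = (\<Prod>p\<in>prime_factors u. p ^ multiplicity p u)"
    unfolding U_def
  proof (rule prod.cong[OF refl])
    fix p assume p: "p \<in> prime_factors u"
    hence pp: "prime p" "p dvd u" by auto
    have "\<not> p dvd w" using assms(3) pp
      by (meson coprime_common_divisor not_prime_unit)
    then show "p ^ multiplicity p (u*w) = p ^ multiplicity p u"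
      using pp assms by (simp add: prime_elem_multiplicity_mult_distrib not_dvd_imp_multiplicity_0)
  qed
  also have "\<dots> = u" using prime_factorization_nat[OF assms(1)] by simp
  finally show ?thesis .
qed

lemma pf_diff: fixes u w :: nat assumes "u > 0" "w > 0" "coprime u w"
  shows "prime_factors (u*w) - prime_factors u = prime_factors w"
proof -
  have "\<not> (p \<in> prime_factors u \<and> p \<in> prime_factors w)" for p
    using assms by (meson coprime_common_divisor in_prime_factors_iff not_prime_unit)
  moreover have "prime_factors (u*w) = prime_factors u \<union> prime_factors w"
    using assms(1,2) by (intro prime_factors_product) auto
  ultimately show ?thesis by blast
qed


definition E :: "real \<Rightarrow> complex" where "E t = exp (\<i> * complex_of_real t)"

lemma E_add: "E (a + b) = E a * E b"
  unfolding E_def by (simp add: distrib_left exp_add)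

lemma E_sum: "finite A \<Longrightarrow> E (\<Sum>i\<in>A. f i) = (\<Prod>i\<in>A. E (f i))"
  by (induction A rule: finite_induct) (simp_all add: E_add, simp add: E_def)

lemma E_cos: "E t + E (-t) = complex_of_real (2 * cos t)"
proof -
  have "cos (complex_of_real t) = (E t + E (-t)) / 2"
    unfolding E_def by (subst cos_exp_eq) simp
  thus ?thesis by (simp add: cos_of_real mult.commute)
qed

lemma inv_powr: fixes n :: nat assumes "n > 0"
  shows "inverse (of_nat n powr Complex a b) = complex_of_real (real n powr -a) * E (-(b * ln n))"
proof -
  have "inverse (of_nat n powr Complex a b) = exp (-(Complex a b * of_real (ln n)))"
    using assms by (simp add: powr_def exp_minus)
  also have "-(Complex a b * of_real (ln n)) = of_real (-a * ln n) + \<i> * of_real (-(b * ln n))"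
    by (simp add: complex_eq_iff)
  also have "exp \<dots> = exp (of_real (-a * ln n)) * E (-(b * ln n))"
    by (simp add: exp_add[symmetric] E_def)
  also have "exp (complex_of_real (-a * ln n)) = of_real (real n powr -a)"
    using assms by (simp add: powr_def exp_of_real[symmetric])
  finally show ?thesis .
qed


lemma norm_E [simp]: "norm (E t) = 1"
  unfolding E_def by (simp add: norm_exp_eq_Re)

lemma cnj_E: "cnj (E t) = E (-t)"
  unfolding E_def by (subst exp_cnj) simp

lemma powr_summable: assumes "x > 1" shows "(\<lambda>n::nat. real n powr -x) summable_on UNIV"
proof -
  have "summable (\<lambda>n::nat. real n powr -x)" using assms by (simp add: summable_real_powr_iff)
  hence "summable (\<lambda>n::nat. norm (real n powr -x))" by simp
  thus ?thesis by (rule norm_summable_imp_summable_on)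
qed

lemma zeta_has_sum: assumes "x > 1"
  shows "((\<lambda>n. complex_of_real (real n powr -x) * E (-(b * ln n))) has_sum zeta (Complex x b)) {0<..}"
proof -
  define h where "h n = inverse (of_nat n powr Complex x b)" for n :: nat
  have h0: "h 0 = 0" by (simp add: h_def)
  have nh: "norm (h n) = real n powr -x" for n
  proof (cases "n = 0")
    case True thus ?thesis by (simp add: h0)
  next
    case False thus ?thesis by (simp add: h_def inv_powr norm_mult)
  qed
  have "summable (\<lambda>n. norm (h n))" using assms by (simp add: nh summable_real_powr_iff)
  hence "h summable_on UNIV" by (rule norm_summable_imp_summable_on)
  hence hs: "(h has_sum infsum h UNIV) UNIV" by (rule has_sum_infsum)
  hence "h sums infsum h UNIV" by (rule has_sum_imp_sums)
  hence "(\<lambda>n. h (Suc n)) sums infsum h UNIV" by (simp add: sums_Suc_iff h0)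
  hence "zeta (Complex x b) = infsum h UNIV" unfolding zeta_def h_def by (simp add: sums_iff)
  with hs have "(h has_sum zeta (Complex x b)) UNIV" by simp
  hence "(h has_sum zeta (Complex x b)) {0<..}"
    by (rule has_sum_cong_neutral[THEN iffD1, rotated -1]) (auto simp: h0)
  thus ?thesis
    by (rule has_sum_cong[THEN iffD1, rotated -1]) (simp add: h_def inv_powr)
qed


lemma has_sum_product:
  fixes f :: "'a \<Rightarrow> complex" and g :: "'b \<Rightarrow> complex"
  assumes fa: "(f has_sum a) A" and gb: "(g has_sum b) B"
    and nf: "(\<lambda>x. norm (f x)) summable_on A" and ng: "(\<lambda>y. norm (g y)) summable_on B"
  shows "((\<lambda>(x,y). f x * g y) has_sum (a*b)) (A \<times> B)"
proof -
  have "(\<lambda>p. norm ((\<lambda>(x,y). f x * g y) p)) summable_on A \<times> B"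
  proof (rule Infinite_Sum.abs_summable_on_Sigma_iff[THEN iffD2], intro conjI ballI)
    fix x assume "x \<in> A"
    show "(\<lambda>y. norm ((\<lambda>(x,y). f x * g y) (x,y))) summable_on B"
      using summable_on_cmult_right[OF ng, of "norm (f x)"] by (simp add: norm_mult)
  next
    have "(\<lambda>x. norm (f x) * infsum (\<lambda>y. norm (g y)) B) summable_on A"
      by (rule summable_on_cmult_left[OF nf])
    moreover have "infsum (\<lambda>y. norm ((\<lambda>(x,y). f x * g y) (x,y))) B
        = norm (f x) * infsum (\<lambda>y. norm (g y)) B" for x
      by (simp add: norm_mult infsum_cmult_right ng)
    ultimately show "(\<lambda>x. norm (infsum (\<lambda>y. norm ((\<lambda>(x,y). f x * g y) (x,y))) B)) summable_on A"
      by (simp add: infsum_nonneg)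
  qed
  hence sm: "(\<lambda>(x,y). f x * g y) summable_on A \<times> B" by (rule abs_summable_summable)
  show ?thesis
  proof (rule has_sum_SigmaI[where g = "\<lambda>x. f x * b"])
    fix x assume "x \<in> A"
    show "((\<lambda>y. (\<lambda>(x,y). f x * g y) (x,y)) has_sum f x * b) B"
      using has_sum_cmult_right[OF gb, of "f x"] by simp
  next
    show "((\<lambda>x. f x * b) has_sum a * b) A" by (rule has_sum_cmult_left[OF fa])
  next
    show "(\<lambda>(x,y). f x * g y) summable_on A \<times> B" by (rule sm)
  qed
qed

lemma ln_U: assumes "S \<subseteq> prime_factors m"
  shows "ln (real (U m S)) = (\<Sum>p\<in>S. ln (real (p ^ multiplicity p m)))"
proof -
  have fin: "finite S" using assms finite_subset by blast
  have "real (U m S) = (\<Prod>p\<in>S. real (p ^ multiplicity p m))" unfolding U_def by simp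
  moreover have "\<And>p. p \<in> S \<Longrightarrow> real (p ^ multiplicity p m) \<noteq> 0"
    using assms by (auto dest: in_prime_factors_imp_prime prime_gt_0_nat)
  ultimately show ?thesis using fin by (simp add: ln_prod)
qed

lemma inner_sum:
  fixes x y :: real and m :: nat
  assumes m: "m > 0"
  defines "r \<equiv> \<lambda>n::nat. real n powr -x"
  defines "f \<equiv> \<lambda>n::nat. complex_of_real (r n) * E (-(y * ln (real n)))"
  defines "g \<equiv> \<lambda>n::nat. complex_of_real (r n) * E (y * ln (real n))"
  shows "(\<Sum>S\<in>Pow (prime_factors m). g (U m S) * f (U m (prime_factors m - S)))
    = complex_of_real ((2::real) ^ omega m / real m powr x *
      (\<Prod>p\<in>prime_factors m. cos (y * ln (real (p ^ multiplicity p m)))))"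
proof -
  define L where "L p = ln (real (p ^ multiplicity p m))" for p
  define PF where "PF = prime_factors m"
  have fin: "finite PF" unfolding PF_def by simp
  have trm: "g (U m S) * f (U m (PF - S)) =
      complex_of_real (r m) * ((\<Prod>p\<in>S. E (y * L p)) * (\<Prod>p\<in>PF - S. E (-(y * L p))))"
    if S: "S \<subseteq> PF" for S
  proof -
    have S': "S \<subseteq> prime_factors m" "PF - S \<subseteq> prime_factors m" using S by (auto simp: PF_def)
    have um: "U m S * U m (PF - S) = m" using U_mult[OF m S'(1)] by (simp add: PF_def)
    have rm: "r (U m S) * r (U m (PF - S)) = r m"
      unfolding r_def by (subst um[symmetric], subst of_nat_mult, subst powr_mult) auto
    have finS: "finite S" "finite (PF - S)" using S fin finite_subset by auto
    have l1: "E (y * ln (real (U m S))) = (\<Prod>p\<in>S. E (y * L p))"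
      by (simp add: ln_U[OF S'(1)] L_def sum_distrib_left E_sum[OF finS(1)])
    have l2: "E (-(y * ln (real (U m (PF - S))))) = (\<Prod>p\<in>PF - S. E (-(y * L p)))"
      by (simp add: ln_U[OF S'(2)] L_def sum_distrib_left sum_negf[symmetric] E_sum[OF finS(2)])
    have "g (U m S) * f (U m (PF - S)) = complex_of_real (r (U m S) * r (U m (PF - S))) *
        (E (y * ln (real (U m S))) * E (-(y * ln (real (U m (PF - S))))))"
      by (simp add: g_def f_def)
    also have "\<dots> = complex_of_real (r m) * ((\<Prod>p\<in>S. E (y * L p)) * (\<Prod>p\<in>PF - S. E (-(y * L p))))"
      by (simp only: rm l1 l2)
    finally show ?thesis .
  qed
  have "(\<Sum>S\<in>Pow PF. g (U m S) * f (U m (PF - S)))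
     = (\<Sum>S\<in>Pow PF. complex_of_real (r m) * ((\<Prod>p\<in>S. E (y * L p)) * (\<Prod>p\<in>PF - S. E (-(y * L p)))))"
    by (intro sum.cong refl) (simp add: trm)
  also have "\<dots> = complex_of_real (r m) * (\<Prod>p\<in>PF. E (y * L p) + E (-(y * L p)))"
    by (simp add: sum_distrib_left[symmetric] prod_add[OF fin])
  also have "(\<Prod>p\<in>PF. E (y * L p) + E (-(y * L p))) = (\<Prod>p\<in>PF. complex_of_real (2 * cos (y * L p)))"
    by (simp add: E_cos)
  also have "\<dots> = complex_of_real (2 ^ card PF * (\<Prod>p\<in>PF. cos (y * L p)))"
    by (simp add: prod.distrib)
  finally show ?thesis
    by (simp add: PF_def L_def omega_def r_def powr_minus_divide)
qed


lemma E_diff: "E (a - b) = E a * E (-b)"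
  by (metis E_add diff_conv_add_uminus)

theorem mainTheorem4:
  fixes x y :: real
  assumes "x > 1"
  defines "a \<equiv> (\<lambda>m::nat. (2::real) ^ omega m / real m powr x *
      (\<Prod>p\<in>prime_factors m. cos (y * ln (real (p ^ multiplicity p m)))))"
  shows "summable (\<lambda>m. a (Suc m)) \<and>
         complex_of_real ((cmod (zeta (Complex x y)))\<^sup>2)
           = zeta (complex_of_real (2 * x)) * complex_of_real (\<Sum>m. a (Suc m))"
proof -
  have x1: "x > 1" by fact
  define P where "P = {0::nat<..}"
  define r where "r = (\<lambda>n::nat. real n powr -x)"
  define f where "f = (\<lambda>n::nat. complex_of_real (r n) * E (-(y * ln (real n))))"
  define g where "g = (\<lambda>n::nat. complex_of_real (r n) * E (y * ln (real n)))"
  define K where "K = (\<lambda>n::nat. complex_of_real (real n powr -(2*x)) * E (-(0 * ln (real n))))"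
  define z where "z = zeta (Complex x y)"
  define z2 where "z2 = zeta (Complex (2*x) 0)"
  have Zf: "(f has_sum z) P" unfolding f_def r_def z_def P_def by (rule zeta_has_sum[OF x1])
  have Zg: "(g has_sum cnj z) P"
  proof -
    have "((\<lambda>n. cnj (f n)) has_sum cnj z) P" using Zf by simp
    moreover have "cnj (f n) = g n" for n by (simp add: f_def g_def cnj_E)
    ultimately show ?thesis by simp
  qed
  have ZK: "(K has_sum z2) P" unfolding K_def z2_def P_def by (rule zeta_has_sum) (use x1 in simp)
  have rs: "r summable_on P" unfolding r_def
    by (rule summable_on_subset_banach[OF powr_summable[OF x1]]) simp
  have nf: "(\<lambda>n. norm (f n)) summable_on P"
    using rs by (simp add: f_def norm_mult r_def)
  have ng: "(\<lambda>n. norm (g n)) summable_on P"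
    using rs by (simp add: g_def norm_mult r_def)
  have nK: "(\<lambda>n. norm (K n)) summable_on P"
  proof -
    have "(\<lambda>n::nat. real n powr -(2*x)) summable_on P"
      by (rule summable_on_subset_banach[OF powr_summable]) (use x1 in auto)
    thus ?thesis by (simp add: K_def norm_mult)
  qed
  define G where "G = (\<lambda>(u,w). g u * f w)"
  have Prod1: "(G has_sum (cnj z * z)) (P \<times> P)"
    unfolding G_def by (rule has_sum_product[OF Zg Zf ng nf])
  define C where "C = {(u::nat,w::nat). 0 < u \<and> 0 < w \<and> coprime u w}"
  have CP: "C \<subseteq> P \<times> P" by (auto simp: C_def P_def)
  have "G summable_on P \<times> P" using Prod1 has_sum_imp_summable by blast
  hence "G summable_on C" using CP summable_on_subset_banach by blast
  then obtain \<sigma> where GC: "(G has_sum \<sigma>) C" using summable_on_def by blast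
  have nG: "(\<lambda>c. norm (G c)) summable_on C"
    using \<open>G summable_on C\<close> summable_on_iff_abs_summable_on_complex by blast
  have key1: "g (k*u) * f (k*w) = K k * G (u,w)" if "k > 0" "u > 0" "w > 0" for k u w :: nat
  proof -
    have rr: "r (k*u) * r (k*w) = real k powr -(2*x) * (r u * r w)"
      unfolding r_def by (simp add: powr_mult powr_add[symmetric])
    have "g (k*u) * f (k*w) = complex_of_real (r (k*u) * r (k*w)) *
        (E (y * ln (real k)) * E (-(y * ln (real k)))) * (E (y * ln (real u)) * E (-(y * ln (real w))))"
      using that by (simp add: g_def f_def ln_mult distrib_left E_add E_diff)
    also have "E (y * ln (real k)) * E (-(y * ln (real k))) = 1"
      using E_add[of "y * ln (real k)" "-(y * ln (real k))"] by (simp add: E_def)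
    finally have 1: "g (k*u) * f (k*w) = complex_of_real (r (k*u) * r (k*w)) *
        (E (y * ln (real u)) * E (-(y * ln (real w))))" by simp
    have E0: "E 0 = 1" by (simp add: E_def)
    have "K k * G (u,w) = complex_of_real (real k powr -(2*x)) * (complex_of_real (r u) * complex_of_real (r w) *
        (E (y * ln (real u)) * E (-(y * ln (real w)))))"
      by (simp add: K_def G_def g_def f_def E0 mult_ac)
    also have "\<dots> = complex_of_real (real k powr -(2*x) * (r u * r w)) *
        (E (y * ln (real u)) * E (-(y * ln (real w))))"
      by (simp add: mult_ac)
    finally show ?thesis using 1 rr by simp
  qed
  have H1: "((\<lambda>(k,c). K k * G c) has_sum (cnj z * z)) (P \<times> C)"
  proof -
    have "((\<lambda>(k,c). K k * G c) has_sum (cnj z * z)) (P \<times> C) = (G has_sum (cnj z * z)) (P \<times> P)"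
    proof (rule has_sum_reindex_bij_witness[where j = "\<lambda>(k,(u,w)). (k*u, k*w)"
          and i = "\<lambda>(d,e). (gcd d e, (d div gcd d e, e div gcd d e))"])
      fix p assume "p \<in> P \<times> C"
      then obtain k u w where p: "p = (k,(u,w))" "k > 0" "u > 0" "w > 0" "coprime u w"
        by (auto simp: P_def C_def)
      have "gcd (k*u) (k*w) = k" using p by (simp add: gcd_mult_distrib_nat[symmetric])
      thus "(\<lambda>(d,e). (gcd d e, (d div gcd d e, e div gcd d e))) ((\<lambda>(k,(u,w)). (k*u, k*w)) p) = p"
        using p by simp
      show "(\<lambda>(k,(u,w)). (k*u, k*w)) p \<in> P \<times> P" using p by (simp add: P_def)
      show "G ((\<lambda>(k,(u,w)). (k*u, k*w)) p) = (\<lambda>(k,c). K k * G c) p"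
        using p key1[of k u w] by (simp add: G_def)
    next
      fix q assume "q \<in> P \<times> P"
      then obtain d e where q: "q = (d,e)" "d > 0" "e > 0" by (auto simp: P_def)
      have gp: "gcd d e > 0" using q by simp
      show "(\<lambda>(k,(u,w)). (k*u, k*w)) ((\<lambda>(d,e). (gcd d e, (d div gcd d e, e div gcd d e))) q) = q"
        using q by simp
      have "coprime (d div gcd d e) (e div gcd d e)" using q by (intro div_gcd_coprime) auto
      moreover have "d div gcd d e > 0" "e div gcd d e > 0" using q
        by (auto simp: div_greater_zero_iff)
      ultimately show "(\<lambda>(d,e). (gcd d e, (d div gcd d e, e div gcd d e))) q \<in> P \<times> C"
        using q gp by (simp add: P_def C_def)
    qed simp
    thus ?thesis using Prod1 by simp
  qed
  have H2: "((\<lambda>(k,c). K k * G c) has_sum (z2 * \<sigma>)) (P \<times> C)"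
    by (rule has_sum_product[OF ZK GC nK nG])
  have eq1: "cnj z * z = z2 * \<sigma>" using has_sum_unique[OF H1 H2] .
  define \<phi> where "\<phi> = (\<lambda>(m,S). (U m S, U m (prime_factors m - S)))"
  define SG where "SG = Sigma P (\<lambda>m. Pow (prime_factors m))"
  have H3: "((\<lambda>p. G (\<phi> p)) has_sum \<sigma>) SG"
  proof -
    have "((\<lambda>p. G (\<phi> p)) has_sum \<sigma>) SG = (G has_sum \<sigma>) C"
    proof (rule has_sum_reindex_bij_witness[where j = \<phi> and i = "\<lambda>(u,w). (u*w, prime_factors u)"])
      fix p assume "p \<in> SG"
      then obtain m S where p: "p = (m,S)" "m > 0" "S \<subseteq> prime_factors m"
        by (auto simp: SG_def P_def)
      show "(\<lambda>(u,w). (u*w, prime_factors u)) (\<phi> p) = p"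
        using p by (simp add: \<phi>_def U_mult pf_U)
      show "\<phi> p \<in> C" using p
        by (auto simp: \<phi>_def C_def intro!: U_pos coprime_U)
    next
      fix c assume "c \<in> C"
      then obtain u w where c: "c = (u,w)" "u > 0" "w > 0" "coprime u w" by (auto simp: C_def)
      have "U (u*w) (prime_factors (u*w) - prime_factors u) = w"
        using U_coprime_left[of w u] c by (simp add: pf_diff mult.commute coprime_commute)
      thus "\<phi> ((\<lambda>(u,w). (u*w, prime_factors u)) c) = c"
        using c by (simp add: \<phi>_def U_coprime_left)
      have "prime_factors u \<subseteq> prime_factors (u*w)"
        using c by (simp add: prime_factors_product)
      thus "(\<lambda>(u,w). (u*w, prime_factors u)) c \<in> SG"
        using c by (simp add: SG_def P_def)
    qed auto
    thus ?thesis using GC by simp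
  qed
  have H4: "((\<lambda>m. complex_of_real (a m)) has_sum \<sigma>) P"
  proof (rule has_sum_Sigma'[OF H3[unfolded SG_def]])
    fix m assume m: "m \<in> P"
    have "((\<lambda>S. G (\<phi> (m,S))) has_sum (\<Sum>S\<in>Pow (prime_factors m). G (\<phi> (m,S)))) (Pow (prime_factors m))"
      by (rule has_sum_finite) simp
    also have "(\<Sum>S\<in>Pow (prime_factors m). G (\<phi> (m,S))) = complex_of_real (a m)"
      using inner_sum[of m x y] m
      by (simp add: G_def \<phi>_def a_def f_def g_def r_def P_def)
    finally show "((\<lambda>S. G (\<phi> (m,S))) has_sum complex_of_real (a m)) (Pow (prime_factors m))" .
  qed
  have aP: "(a has_sum Re \<sigma>) P" using has_sum_Re[OF H4] by simp
  have "((\<lambda>m. 0::real) has_sum Im \<sigma>) P" using has_sum_Im[OF H4] by simp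
  moreover have "((\<lambda>m. 0::real) has_sum 0) P" by simp
  ultimately have "Im \<sigma> = 0" using has_sum_unique by metis
  hence sig: "\<sigma> = complex_of_real (Re \<sigma>)" by (simp add: complex_eq_iff)
  have a0: "a 0 = 0" by (simp add: a_def)
  have "(a has_sum Re \<sigma>) UNIV"
    using aP by (rule has_sum_cong_neutral[THEN iffD1, rotated -1]) (auto simp: P_def a0)
  hence "a sums Re \<sigma>" by (rule has_sum_imp_sums)
  hence aS: "(\<lambda>m. a (Suc m)) sums Re \<sigma>" by (simp add: sums_Suc_iff a0)
  have "complex_of_real ((cmod z)\<^sup>2) = z * cnj z" by (rule complex_norm_square)
  also have "\<dots> = z2 * \<sigma>" using eq1 by (simp add: mult.commute)
  finally have "complex_of_real ((cmod z)\<^sup>2) = z2 * complex_of_real (\<Sum>m. a (Suc m))"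
    using aS sig by (simp add: sums_iff)
  moreover have "complex_of_real (2 * x) = Complex (2*x) 0" by (simp add: complex_eq_iff)
  ultimately show ?thesis using aS by (simp add: z_def z2_def sums_iff)
qed

end
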